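(* Let $n\ge1$ and let $a$ be an inversion sequence of length $n$. Then $a$ avoids each of the patterns $102$, $201$, $210$ if and only if $a$ can be written either as $a=p_1\circ p_2$ or as $a=p_1\circ r_2$, where: (i) $p_1$ is a (possibly empty) non-decreasing sequence with $\max(p_1)<\max(a)$ (if nonempty); (ii) $p_2$ is a nonempty sequence with all entries in $\{\max(a),\operatorname{premax}(a)\}$ whose first entry is $\max(a)$; (iii) $r_2=(\max(a),\dots,\max(a),k,\dots,k)$ consists of one or more copies of $\max(a)$ followed by one or more copies of a single value $k$ with $0\le k<\operatorname{premax}(a)$. (When $a$ has only one distinct value, $\operatorname{premax}(a)$ is undefined, and the decomposition is $p_1$ empty and $p_2=a$.)
   Context: An inversion sequence of length $n$ is an integer sequence $(a_1,\dots,a_n)$ with $0\le a_i<i$ for all $i$. A pattern is a sequence $\sigma$ of non-negative integers containing every value from $0$ to $\max(\sigma)$; the reduction of a sequence replaces its smallest values by $0$, the next smallest by $1$, etc. A sequence $a$ contains $\sigma$ if some (not necessarily consecutive) subsequence of $a$ has reduction $\sigma$; otherwise $a$ avoids $\sigma$. For a sequence $a$, $\max(a)$ is its largest value and $\operatorname{premax}(a)$ is the largest value of $a$ strictly less than $\max(a)$. $\circ$ denotes concatenation. *)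

theory Defs
  imports Main "HOL-Library.Sublist"
begin

text \<open>Inversion sequence of length n, as a 0-indexed list: entry at position i (1-indexed i+1)
  satisfies a_(i+1) < i+1.\<close>
definition inv_seq :: "nat \<Rightarrow> nat list \<Rightarrow> bool" where
  "inv_seq n a \<longleftrightarrow> length a = n \<and> (\<forall>i<n. a ! i < i + 1)"

definition reduction :: "nat list \<Rightarrow> nat list" where
  "reduction xs = map (\<lambda>x. card {y \<in> set xs. y < x}) xs"

definition contains :: "nat list \<Rightarrow> nat list \<Rightarrow> bool" where
  "contains a \<sigma> \<longleftrightarrow> (\<exists>s. subseq s a \<and> reduction s = \<sigma>)"

definition avoids :: "nat list \<Rightarrow> nat list \<Rightarrow> bool" where
  "avoids a \<sigma> \<longleftrightarrow> \<not> contains a \<sigma>"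

definition seqmax :: "nat list \<Rightarrow> nat" where
  "seqmax a = Max (set a)"

text \<open>Largest value strictly less than the maximum (unspecified if a has one distinct value).\<close>
definition premax :: "nat list \<Rightarrow> nat" where
  "premax a = Max {x \<in> set a. x < seqmax a}"

end

theory Submission
  imports Defs
begin


lemma subseq_Cons_idx:
  "subseq (x#xs) ys \<longleftrightarrow> (\<exists>i<length ys. ys!i = x \<and> subseq xs (drop (Suc i) ys))"
proof (induction ys)
  case Nil then show ?case by simp
next
  case (Cons y ys)
  show ?case
  proof
    assume h: "subseq (x#xs) (y#ys)"
    show "\<exists>i<length (y#ys). (y#ys)!i = x \<and> subseq xs (drop (Suc i) (y#ys))"
    proof (cases "x = y \<and> subseq xs ys")
      case True then show ?thesis by (intro exI[of _ 0]) auto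
    next
      case False
      then have "subseq (x#xs) ys" using h by (auto split: if_splits)
      then obtain i where "i<length ys" "ys!i = x" "subseq xs (drop (Suc i) ys)" using Cons.IH by blast
      then show ?thesis by (intro exI[of _ "Suc i"]) auto
    qed
  next
    assume "\<exists>i<length (y#ys). (y#ys)!i = x \<and> subseq xs (drop (Suc i) (y#ys))"
    then obtain i where i: "i<length (y#ys)" "(y#ys)!i = x" "subseq xs (drop (Suc i) (y#ys))" by blast
    show "subseq (x#xs) (y#ys)"
    proof (cases i)
      case 0 then show ?thesis using i by auto
    next
      case (Suc i') then have "subseq (x#xs) ys" using i Cons.IH by auto
      then show ?thesis by (rule list_emb_Cons)
    qed
  qed
qed

lemma subseq1: "subseq [z] a \<longleftrightarrow> (\<exists>k<length a. a!k = z)"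
  by (simp add: subseq_Cons_idx)

lemma subseq3:
  "subseq [x,y,z] a \<longleftrightarrow> (\<exists>i j k. i<j \<and> j<k \<and> k<length a \<and> a!i=x \<and> a!j=y \<and> a!k=z)"
proof
  assume "subseq [x,y,z] a"
  then obtain i where i: "i<length a" "a!i=x" "subseq [y,z] (drop (Suc i) a)" using subseq_Cons_idx[of x "[y,z]" a] by blast
  then obtain j where j: "j<length (drop (Suc i) a)" "(drop (Suc i) a)!j=y" "subseq [z] (drop (Suc j) (drop (Suc i) a))"
    using subseq_Cons_idx[of y "[z]" "drop (Suc i) a"] by blast
  then obtain k where k: "k<length (drop (Suc j) (drop (Suc i) a))" "(drop (Suc j) (drop (Suc i) a))!k=z"
    using subseq1[of z "drop (Suc j) (drop (Suc i) a)"] by blast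
  have j': "Suc i + j < length a" "a!(Suc i + j) = y" using j(1,2) by simp_all
  have k': "Suc (Suc i + j) + k < length a" "a!(Suc (Suc i + j) + k) = z" using k
    by (simp_all add: add.commute add.left_commute)
  show "\<exists>i j k. i<j \<and> j<k \<and> k<length a \<and> a!i=x \<and> a!j=y \<and> a!k=z"
    apply (rule exI[of _ i], rule exI[of _ "Suc i + j"], rule exI[of _ "Suc (Suc i + j) + k"])
    using i(2) j' k' by simp
next
  assume "\<exists>i j k. i<j \<and> j<k \<and> k<length a \<and> a!i=x \<and> a!j=y \<and> a!k=z"
  then obtain i j k where h: "i<j" "j<k" "k<length a" "a!i=x" "a!j=y" "a!k=z" by blast
  have "subseq [z] (drop (Suc j) a)"
    unfolding subseq1
  proof (intro exI[of _ "k - Suc j"] conjI)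
    show "k - Suc j < length (drop (Suc j) a)" using h by simp
    show "drop (Suc j) a ! (k - Suc j) = z" using h by simp
  qed
  then have "subseq [y,z] (drop (Suc i) a)"
    unfolding subseq_Cons_idx[of y]
  proof (intro exI[of _ "j - Suc i"] conjI)
    show "j - Suc i < length (drop (Suc i) a)" using h by simp
    show "drop (Suc i) a ! (j - Suc i) = y" using h by simp
    assume "subseq [z] (drop (Suc j) a)"
    moreover have "drop (Suc (j - Suc i)) (drop (Suc i) a) = drop (Suc j) a" using h by simp
    ultimately show "subseq [z] (drop (Suc (j - Suc i)) (drop (Suc i) a))" by simp
  qed
  then show "subseq [x,y,z] a"
    unfolding subseq_Cons_idx[of x] using h by (intro exI[of _ i]) auto
qed
lemma red_len3: "length (reduction s) = length s" by (simp add: reduction_def)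

lemma card_lt_mono:
  assumes f: "finite S" and c: "card {w\<in>S. w<x} < card {w\<in>S. w<z}"
  shows "x < (z::nat)"
proof (rule ccontr)
  assume "\<not> x < z"
  then have "{w\<in>S. w<z} \<subseteq> {w\<in>S. w<x}" by auto
  then have "card {w\<in>S. w<z} \<le> card {w\<in>S. w<x}" using f by (intro card_mono) auto
  then show False using c by linarith
qed

lemma red3: "reduction [x,y,z] = [card {w\<in>{x,y,z}. w<x}, card {w\<in>{x,y,z}. w<y}, card {w\<in>{x,y,z}. w<z}]"
  by (simp add: reduction_def)

lemma red102A: assumes h: "reduction [x,y,z] = [1,0,2]" shows "y < x \<and> x < (z::nat)"
proof -
  have c1: "card {w\<in>{x,y,z}. w<y} < card {w\<in>{x,y,z}. w<x}" using h unfolding red3 by simp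
  have c2: "card {w\<in>{x,y,z}. w<x} < card {w\<in>{x,y,z}. w<z}" using h unfolding red3 by simp
  have "y < x" by (rule card_lt_mono[OF _ c1]) simp
  moreover have "x < z" by (rule card_lt_mono[OF _ c2]) simp
  ultimately show ?thesis by simp
qed

lemma red102B: assumes as: "y < x" "x < (z::nat)" shows "reduction [x,y,z] = [1,0,2]"
proof -
  have e1: "{w\<in>{x,y,z}. w<x} = {y}" using as by auto
  have e2: "{w\<in>{x,y,z}. w<y} = {}" using as by auto
  have e3: "{w\<in>{x,y,z}. w<z} = {x,y}" using as by auto
  show ?thesis unfolding red3 e1 e2 e3 using as by simp
qed

lemma red102: "reduction [x,y,z] = [1,0,2] \<longleftrightarrow> (y < x \<and> x < (z::nat))"
  using red102A red102B by blast

lemma red201A: assumes h: "reduction [x,y,z] = [2,0,1]" shows "y < z \<and> z < (x::nat)"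
proof -
  have c1: "card {w\<in>{x,y,z}. w<y} < card {w\<in>{x,y,z}. w<z}" using h unfolding red3 by simp
  have c2: "card {w\<in>{x,y,z}. w<z} < card {w\<in>{x,y,z}. w<x}" using h unfolding red3 by simp
  have "y < z" by (rule card_lt_mono[OF _ c1]) simp
  moreover have "z < x" by (rule card_lt_mono[OF _ c2]) simp
  ultimately show ?thesis by simp
qed

lemma red201B: assumes as: "y < z" "z < (x::nat)" shows "reduction [x,y,z] = [2,0,1]"
proof -
  have e1: "{w\<in>{x,y,z}. w<x} = {y,z}" using as by auto
  have e2: "{w\<in>{x,y,z}. w<y} = {}" using as by auto
  have e3: "{w\<in>{x,y,z}. w<z} = {y}" using as by auto
  show ?thesis unfolding red3 e1 e2 e3 using as by simp
qed

lemma red201: "reduction [x,y,z] = [2,0,1] \<longleftrightarrow> (y < z \<and> z < (x::nat))"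
  using red201A red201B by blast

lemma red210A: assumes h: "reduction [x,y,z] = [2,1,0]" shows "z < y \<and> y < (x::nat)"
proof -
  have c1: "card {w\<in>{x,y,z}. w<z} < card {w\<in>{x,y,z}. w<y}" using h unfolding red3 by simp
  have c2: "card {w\<in>{x,y,z}. w<y} < card {w\<in>{x,y,z}. w<x}" using h unfolding red3 by simp
  have "z < y" by (rule card_lt_mono[OF _ c1]) simp
  moreover have "y < x" by (rule card_lt_mono[OF _ c2]) simp
  ultimately show ?thesis by simp
qed

lemma red210B: assumes as: "z < y" "y < (x::nat)" shows "reduction [x,y,z] = [2,1,0]"
proof -
  have e1: "{w\<in>{x,y,z}. w<x} = {y,z}" using as by auto
  have e2: "{w\<in>{x,y,z}. w<y} = {z}" using as by auto
  have e3: "{w\<in>{x,y,z}. w<z} = {}" using as by auto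
  show ?thesis unfolding red3 e1 e2 e3 using as by simp
qed

lemma red210: "reduction [x,y,z] = [2,1,0] \<longleftrightarrow> (z < y \<and> y < (x::nat))"
  using red210A red210B by blast

lemma contains3: "length \<sigma> = 3 \<Longrightarrow> contains a \<sigma> \<longleftrightarrow> (\<exists>x y z. subseq [x,y,z] a \<and> reduction [x,y,z] = \<sigma>)"
  unfolding contains_def
proof
  assume "length \<sigma> = 3" "\<exists>s. subseq s a \<and> reduction s = \<sigma>"
  then obtain s where s: "subseq s a" "reduction s = \<sigma>" by blast
  then have "length s = 3" using \<open>length \<sigma> = 3\<close> red_len3 by metis
  then have "\<exists>x y z. s = [x,y,z]" by (auto simp: length_Suc_conv numeral_3_eq_3)
  then obtain x y z where "s = [x,y,z]" by blast
  then show "\<exists>x y z. subseq [x,y,z] a \<and> reduction [x,y,z] = \<sigma>" using s by blast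
next
  assume "\<exists>x y z. subseq [x,y,z] a \<and> reduction [x,y,z] = \<sigma>"
  then obtain x y z where "subseq [x,y,z] a \<and> reduction [x,y,z] = \<sigma>" by blast
  then show "\<exists>s. subseq s a \<and> reduction s = \<sigma>" by blast
qed

lemma idx3: "(\<exists>x y z. subseq [x,y,z] a \<and> P x y z) \<longleftrightarrow> (\<exists>i j k. i<j \<and> j<k \<and> k<length a \<and> P (a!i) (a!j) (a!k))"
proof
  assume "\<exists>x y z. subseq [x,y,z] a \<and> P x y z"
  then obtain x y z where h: "subseq [x,y,z] a" "P x y z" by blast
  then obtain i j k where "i<j \<and> j<k \<and> k<length a \<and> a!i=x \<and> a!j=y \<and> a!k=z" unfolding subseq3 by blast
  then show "\<exists>i j k. i<j \<and> j<k \<and> k<length a \<and> P (a!i) (a!j) (a!k)" using h by blast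
next
  assume "\<exists>i j k. i<j \<and> j<k \<and> k<length a \<and> P (a!i) (a!j) (a!k)"
  then obtain i j k where h: "i<j" "j<k" "k<length a" "P (a!i) (a!j) (a!k)" by blast
  then have "subseq [a!i,a!j,a!k] a" unfolding subseq3 by blast
  then show "\<exists>x y z. subseq [x,y,z] a \<and> P x y z" using h by blast
qed

lemma len3: "length [x::nat,y,z] = 3" by simp

lemma c102: "contains a [1,0,2] \<longleftrightarrow> (\<exists>i j k. i<j \<and> j<k \<and> k<length a \<and> a!j < a!i \<and> a!i < a!k)"
  unfolding contains3[of "[1,0,2]" a, OF len3[of 1 0 2]] red102 idx3[of a "\<lambda>x y z. y<x \<and> x<z"] by (rule refl)
lemma c201: "contains a [2,0,1] \<longleftrightarrow> (\<exists>i j k. i<j \<and> j<k \<and> k<length a \<and> a!j < a!k \<and> a!k < a!i)"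
  unfolding contains3[of "[2,0,1]" a, OF len3[of 2 0 1]] red201 idx3[of a "\<lambda>x y z. y<z \<and> z<x"] by (rule refl)
lemma c210: "contains a [2,1,0] \<longleftrightarrow> (\<exists>i j k. i<j \<and> j<k \<and> k<length a \<and> a!k < a!j \<and> a!j < a!i)"
  unfolding contains3[of "[2,1,0]" a, OF len3[of 2 1 0]] red210 idx3[of a "\<lambda>x y z. z<y \<and> y<x"] by (rule refl)



lemma no_pat1:
  fixes a :: "nat list" and m M :: nat
  assumes F0: "\<And>u. u<length a \<Longrightarrow> a!u \<le> M"
    and F2: "\<And>t s. t<s \<Longrightarrow> s<m \<Longrightarrow> a!t \<le> a!s"
    and F3: "\<And>t u. m \<le> t \<Longrightarrow> t<length a \<Longrightarrow> a!t < M \<Longrightarrow> u<length a \<Longrightarrow> a!u < M \<Longrightarrow> a!u \<le> a!t"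
  shows "\<not>(\<exists>i j k. i<j \<and> j<k \<and> k<length a \<and> a!j < a!i \<and> a!i < a!k)"
    and "\<not>(\<exists>i j k. i<j \<and> j<k \<and> k<length a \<and> a!j < a!k \<and> a!k < a!i)"
    and "\<not>(\<exists>i j k. i<j \<and> j<k \<and> k<length a \<and> a!k < a!j \<and> a!j < a!i)"
proof -
  show "\<not>(\<exists>i j k. i<j \<and> j<k \<and> k<length a \<and> a!j < a!i \<and> a!i < a!k)"
  proof
    assume "\<exists>i j k. i<j \<and> j<k \<and> k<length a \<and> a!j < a!i \<and> a!i < a!k"
    then obtain i j k where h: "i<j" "j<k" "k<length a" "a!j < a!i" "a!i < a!k" by blast
    have "a!k \<le> M" using F0 h by auto
    show False
    proof (cases "j < m")
      case True then show False using F2[of i j] h by auto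
    next
      case False then show False using F3[of j i] h \<open>a!k \<le> M\<close> by auto
    qed
  qed
  show "\<not>(\<exists>i j k. i<j \<and> j<k \<and> k<length a \<and> a!j < a!k \<and> a!k < a!i)"
  proof
    assume "\<exists>i j k. i<j \<and> j<k \<and> k<length a \<and> a!j < a!k \<and> a!k < a!i"
    then obtain i j k where h: "i<j" "j<k" "k<length a" "a!j < a!k" "a!k < a!i" by blast
    have "a!i \<le> M" using F0 h by auto
    show False
    proof (cases "k < m")
      case True then show False using F2[of i j] h by auto
    next
      case k: False
      show False
      proof (cases "j < m")
        case True then show False using F2[of i j] h by auto
      next
        case False then show False using F3[of j k] h \<open>a!i \<le> M\<close> by auto
      qed
    qed
  qed
  show "\<not>(\<exists>i j k. i<j \<and> j<k \<and> k<length a \<and> a!k < a!j \<and> a!j < a!i)"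
  proof
    assume "\<exists>i j k. i<j \<and> j<k \<and> k<length a \<and> a!k < a!j \<and> a!j < a!i"
    then obtain i j k where h: "i<j" "j<k" "k<length a" "a!k < a!j" "a!j < a!i" by blast
    have "a!i \<le> M" using F0 h by auto
    show False
    proof (cases "k < m")
      case True then show False using F2[of j k] h by auto
    next
      case False then show False using F3[of k j] h \<open>a!i \<le> M\<close> by auto
    qed
  qed
qed

lemma no_pat2:
  fixes a :: "nat list" and m m' M kv :: nat
  assumes F0: "\<And>u. u<length a \<Longrightarrow> a!u \<le> M"
    and F2: "\<And>t s. t<s \<Longrightarrow> s<m \<Longrightarrow> a!t \<le> a!s"
    and FM: "\<And>t. m \<le> t \<Longrightarrow> t < m' \<Longrightarrow> a!t = M"
    and FK: "\<And>t. m' \<le> t \<Longrightarrow> t < length a \<Longrightarrow> a!t = kv"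
    and mm: "m \<le> m'"
  shows "\<not>(\<exists>i j k. i<j \<and> j<k \<and> k<length a \<and> a!j < a!i \<and> a!i < a!k)"
    and "\<not>(\<exists>i j k. i<j \<and> j<k \<and> k<length a \<and> a!j < a!k \<and> a!k < a!i)"
    and "\<not>(\<exists>i j k. i<j \<and> j<k \<and> k<length a \<and> a!k < a!j \<and> a!j < a!i)"
proof -
  have R: "t < m \<or> (m \<le> t \<and> t < m' \<and> a!t = M) \<or> (m' \<le> t \<and> a!t = kv)" if "t < length a" for t
    using FM FK that by (meson not_le)
  show "\<not>(\<exists>i j k. i<j \<and> j<k \<and> k<length a \<and> a!j < a!i \<and> a!i < a!k)"
  proof
    assume "\<exists>i j k. i<j \<and> j<k \<and> k<length a \<and> a!j < a!i \<and> a!i < a!k"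
    then obtain i j k where h: "i<j" "j<k" "k<length a" "a!j < a!i" "a!i < a!k" by blast
    have "a!k \<le> M" using F0 h by auto
    have "i < length a" "j < length a" using h by auto
    then show False using R[of i] R[of j] R[of k] h F2[of i j] \<open>a!k \<le> M\<close> by auto
  qed
  show "\<not>(\<exists>i j k. i<j \<and> j<k \<and> k<length a \<and> a!j < a!k \<and> a!k < a!i)"
  proof
    assume "\<exists>i j k. i<j \<and> j<k \<and> k<length a \<and> a!j < a!k \<and> a!k < a!i"
    then obtain i j k where h: "i<j" "j<k" "k<length a" "a!j < a!k" "a!k < a!i" by blast
    have "a!i \<le> M" using F0 h by auto
    have "i < length a" "j < length a" using h by auto
    then show False using R[of i] R[of j] R[of k] h F2[of i j] \<open>a!i \<le> M\<close> by auto
  qed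
  show "\<not>(\<exists>i j k. i<j \<and> j<k \<and> k<length a \<and> a!k < a!j \<and> a!j < a!i)"
  proof
    assume "\<exists>i j k. i<j \<and> j<k \<and> k<length a \<and> a!k < a!j \<and> a!j < a!i"
    then obtain i j k where h: "i<j" "j<k" "k<length a" "a!k < a!j" "a!j < a!i" by blast
    have "a!i \<le> M" using F0 h by auto
    have "i < length a" "j < length a" using h by auto
    then show False using R[of i] R[of j] R[of k] h F2[of i j] F2[of j k] \<open>a!i \<le> M\<close> by auto
  qed
qed



theorem mainTheorem2:
  fixes n :: nat and a :: "nat list"
  assumes "n \<ge> 1" and "inv_seq n a"
  shows "(avoids a [1,0,2] \<and> avoids a [2,0,1] \<and> avoids a [2,1,0]) \<longleftrightarrow>
    ((\<exists>p1 p2. a = p1 @ p2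
        \<and> sorted p1 \<and> (p1 \<noteq> [] \<longrightarrow> seqmax p1 < seqmax a)
        \<and> p2 \<noteq> [] \<and> hd p2 = seqmax a \<and> set p2 \<subseteq> {seqmax a, premax a})
     \<or> (\<exists>p1 i j k. a = p1 @ replicate i (seqmax a) @ replicate j k
        \<and> sorted p1 \<and> (p1 \<noteq> [] \<longrightarrow> seqmax p1 < seqmax a)
        \<and> i \<ge> 1 \<and> j \<ge> 1 \<and> k < premax a))"
proof -
  define M where "M = seqmax a"
  define L where "L = length a"
  have L1: "L \<ge> 1" using assms unfolding inv_seq_def L_def by simp
  then have ane: "a \<noteq> []" unfolding L_def by auto
  have Mset: "M \<in> set a" unfolding M_def seqmax_def using ane by simp
  have F0: "\<And>u. u<length a \<Longrightarrow> a!u \<le> M" unfolding M_def seqmax_def by simp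
  have PM: "\<And>u. u<length a \<Longrightarrow> a!u < M \<Longrightarrow> a!u \<le> premax a"
    unfolding premax_def M_def[symmetric] by (intro Max_ge) auto
  have P_in: "premax a \<in> set a \<and> premax a < M" if "u<length a" "a!u < M" for u
  proof -
    have "{x \<in> set a. x < M} \<noteq> {}" using that by (metis (mono_tags, lifting) empty_iff mem_Collect_eq nth_mem)
    then have "premax a \<in> {x \<in> set a. x < M}" unfolding premax_def M_def[symmetric] by (intro Max_in) auto
    then show ?thesis by simp
  qed
  let ?A = "avoids a [1,0,2] \<and> avoids a [2,0,1] \<and> avoids a [2,1,0]"
  have Aeq: "?A \<longleftrightarrow> \<not>(\<exists>i j k. i<j \<and> j<k \<and> k<length a \<and> a!j < a!i \<and> a!i < a!k)
     \<and> \<not>(\<exists>i j k. i<j \<and> j<k \<and> k<length a \<and> a!j < a!k \<and> a!k < a!i)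
     \<and> \<not>(\<exists>i j k. i<j \<and> j<k \<and> k<length a \<and> a!k < a!j \<and> a!j < a!i)"
    unfolding avoids_def c102 c201 c210 by blast
  show ?thesis
    unfolding M_def[symmetric]
  proof
    assume "?A"
    then have N1: "\<not>(\<exists>i j k. i<j \<and> j<k \<and> k<length a \<and> a!j < a!i \<and> a!i < a!k)"
      and N2: "\<not>(\<exists>i j k. i<j \<and> j<k \<and> k<length a \<and> a!j < a!k \<and> a!k < a!i)"
      and N3: "\<not>(\<exists>i j k. i<j \<and> j<k \<and> k<length a \<and> a!k < a!j \<and> a!j < a!i)"
      using Aeq by blast+
    have "\<exists>t<length a. a!t = M" using Mset by (simp add: in_set_conv_nth)
    define m where "m = (LEAST t. t<length a \<and> a!t = M)"
    have m: "m < length a" "a!m = M" unfolding m_def using LeastI_ex[OF \<open>\<exists>t<length a. a!t = M\<close>] by auto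
    have bm: "a!t < M" if "t < m" for t
    proof -
      have "a!t \<noteq> M" using not_less_Least[of t "\<lambda>t. t<length a \<and> a!t = M"] that m unfolding m_def[symmetric] by auto
      then show ?thesis using F0[of t] that m by auto
    qed
    define p1 where "p1 = take m a"
    define p2 where "p2 = drop m a"
    have a12: "a = p1 @ p2" unfolding p1_def p2_def by simp
    have sp1: "sorted p1"
      unfolding sorted_iff_nth_mono
    proof (intro allI impI)
      fix t s assume ts: "t \<le> s" "s < length p1"
      then have sm: "s < m" unfolding p1_def by simp
      have "a!t \<le> a!s"
      proof (rule ccontr)
        assume "\<not> a!t \<le> a!s"
        then have "t < s" "a!s < a!t" using ts by (auto simp: le_less)
        then show False using N1 bm[of t] sm m by (metis order.strict_trans)
      qed
      then show "p1!t \<le> p1!s" unfolding p1_def using ts sm by simp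
    qed
    have mp1: "p1 \<noteq> [] \<longrightarrow> seqmax p1 < M"
    proof
      assume "p1 \<noteq> []"
      then have "seqmax p1 \<in> set p1" unfolding seqmax_def by simp
      then obtain t where "t < length p1" "p1!t = seqmax p1" by (metis in_set_conv_nth)
      then show "seqmax p1 < M" using bm[of t] unfolding p1_def by simp
    qed
    have p2ne: "p2 \<noteq> []" and hp2: "hd p2 = M" unfolding p2_def using m by (auto simp: hd_drop_conv_nth)
    have S_eq: "a!t = a!s" if "m < t" "t < s" "s < length a" "a!t < M" "a!s < M" for t s
    proof (rule ccontr)
      assume "a!t \<noteq> a!s"
      then have "a!t < a!s \<or> a!s < a!t" by auto
      then show False
      proof
        assume "a!t < a!s" then show False using N2 that m by blast
      next
        assume "a!s < a!t" then show False using N3 that m by blast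
      qed
    qed
    show "(\<exists>p1 p2. a = p1 @ p2 \<and> sorted p1 \<and> (p1 \<noteq> [] \<longrightarrow> seqmax p1 < M) \<and>
           p2 \<noteq> [] \<and> hd p2 = M \<and> set p2 \<subseteq> {M, premax a}) \<or>
          (\<exists>p1 i j k. a = p1 @ replicate i M @ replicate j k \<and> sorted p1 \<and>
           (p1 \<noteq> [] \<longrightarrow> seqmax p1 < M) \<and> 1 \<le> i \<and> 1 \<le> j \<and> k < premax a)"
    proof (cases "\<forall>t. m < t \<and> t < length a \<and> a!t < M \<longrightarrow> a!t = premax a")
      case True
      have "set p2 \<subseteq> {M, premax a}"
      proof
        fix x assume "x \<in> set p2"
        then obtain s where s: "s < length p2" "p2!s = x" by (metis in_set_conv_nth)
        then have x: "x = a!(m+s)" "m + s < length a" unfolding p2_def using m by auto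
        show "x \<in> {M, premax a}"
        proof (cases "s = 0")
          case True then show ?thesis using x m by simp
        next
          case False
          then show ?thesis using True[rule_format, of "m+s"] x F0[of "m+s"] by (cases "x = M") auto
        qed
      qed
      then show ?thesis using a12 sp1 mp1 p2ne hp2 by blast
    next
      case False
      then obtain t0 where t0: "m < t0" "t0 < length a" "a!t0 < M" "a!t0 \<noteq> premax a" by blast
      define kv where "kv = a!t0"
      have kvP: "kv < premax a" using PM[of t0] t0 unfolding kv_def by simp
      obtain q where q: "q < length a" "a!q = premax a" using P_in[of t0] t0 by (metis in_set_conv_nth)
      have PltM: "premax a < M" using P_in[of t0] t0 by simp
      have qm: "q < m"
      proof (rule ccontr)
        assume "\<not> q < m"
        moreover have "q \<noteq> m" using q m PltM by auto
        ultimately have "m < q" by simp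
        then have "a!q = a!t0" using S_eq[of q t0] S_eq[of t0 q] q t0 PltM
          by (cases "q < t0"; cases "q = t0") auto
        then show False using t0 q by simp
      qed
      have Sk: "a!t = kv" if "m < t" "t < length a" "a!t < M" for t
        unfolding kv_def using S_eq[of t t0] S_eq[of t0 t] that t0 by (cases "t < t0"; cases "t = t0") auto
      define r where "r = (LEAST t. m < t \<and> t < length a \<and> a!t < M)"
      have "\<exists>t. m < t \<and> t < length a \<and> a!t < M" using t0 by blast
      then have r: "m < r" "r < length a" "a!r < M" unfolding r_def by (smt (verit, ccfv_SIG) LeastI_ex)+
      have rk: "a!r = kv" using Sk r by simp
      have before: "a!t = M" if "m \<le> t" "t < r" for t
      proof (cases "t = m")
        case True then show ?thesis using m by simp
      next
        case False
        have "\<not> (m < t \<and> t < length a \<and> a!t < M)" using not_less_Least[of t "\<lambda>t. m < t \<and> t < length a \<and> a!t < M"] that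
          unfolding r_def[symmetric] by blast
        then show ?thesis using False that r F0[of t] by auto
      qed
      have after: "a!t = kv" if "r \<le> t" "t < length a" for t
      proof (cases "a!t < M")
        case True
        have "m < t" using that r by simp
        then show ?thesis using Sk[of t] True that(2) by blast
      next
        case False
        then have "a!t = M" using F0[of t] that by simp
        moreover have "t \<noteq> r" using r False by auto
        ultimately have atM: "a!t = M" and rt: "r < t" using that by auto
        have "\<exists>i j k. i<j \<and> j<k \<and> k<length a \<and> a!j < a!i \<and> a!i < a!k"
        proof (intro exI conjI)
          show "q < r" using qm r(1) by simp
          show "r < t" by (rule rt)
          show "t < length a" by (rule that(2))
          show "a!r < a!q" using rk kvP q(2) by simp
          show "a!q < a!t" using q(2) PltM atM by simp
        qed
        then show ?thesis using N1 by blast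
      qed
      have aeq: "a = p1 @ replicate (r - m) M @ replicate (length a - r) kv"
      proof (rule nth_equalityI)
        show "length a = length (p1 @ replicate (r - m) M @ replicate (length a - r) kv)"
          unfolding p1_def using m r by simp
        fix t assume tl: "t < length a"
        have lp1: "length p1 = m" unfolding p1_def using m by simp
        show "a!t = (p1 @ replicate (r - m) M @ replicate (length a - r) kv)!t"
        proof (cases "t < m")
          case True
          then have "(p1 @ replicate (r - m) M @ replicate (length a - r) kv)!t = p1!t"
            using lp1 by (simp add: nth_append)
          then show ?thesis unfolding p1_def using True by simp
        next
          case f1: False
          show ?thesis
          proof (cases "t < r")
            case True
            have "t - m < r - m" using True f1 by linarith
            have "(p1 @ replicate (r - m) M @ replicate (length a - r) kv)!t = M"
              using f1 lp1 \<open>t - m < r - m\<close> by (simp add: nth_append)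
            then show ?thesis using before[of t] True f1 by simp
          next
            case False
            have "\<not> t - m < r - m" "t - m - (r - m) < length a - r" using False f1 tl r by linarith+
            then have "(p1 @ replicate (r - m) M @ replicate (length a - r) kv)!t = kv"
              using f1 lp1 tl r by (simp add: nth_append)
            then show ?thesis using after[of t] False tl by simp
          qed
        qed
      qed
      have ij: "1 \<le> r - m" "1 \<le> length a - r" using r by auto
      show ?thesis
        apply (rule disjI2, rule exI[of _ p1], rule exI[of _ "r - m"], rule exI[of _ "length a - r"], rule exI[of _ kv])
        using aeq sp1 mp1 kvP ij by simp
    qed
  next
    assume h: "(\<exists>p1 p2. a = p1 @ p2 \<and> sorted p1 \<and> (p1 \<noteq> [] \<longrightarrow> seqmax p1 < M) \<and>
           p2 \<noteq> [] \<and> hd p2 = M \<and> set p2 \<subseteq> {M, premax a}) \<or>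
          (\<exists>p1 i j k. a = p1 @ replicate i M @ replicate j k \<and> sorted p1 \<and>
           (p1 \<noteq> [] \<longrightarrow> seqmax p1 < M) \<and> 1 \<le> i \<and> 1 \<le> j \<and> k < premax a)"
    show ?A
    proof (cases "\<exists>p1 p2. a = p1 @ p2 \<and> sorted p1 \<and> (p1 \<noteq> [] \<longrightarrow> seqmax p1 < M) \<and>
           p2 \<noteq> [] \<and> hd p2 = M \<and> set p2 \<subseteq> {M, premax a}")
      case True
      then obtain p1 p2 where pp: "a = p1 @ p2" "sorted p1" "set p2 \<subseteq> {M, premax a}" by blast
      have A1: "a!t = p1!t" if "t < length p1" for t
        using that unfolding pp(1) by (simp add: nth_append)
      have A2: "a!t = p2!(t - length p1)" if "length p1 \<le> t" for t
        using that unfolding pp(1) by (simp add: nth_append)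
      have La: "length a = length p1 + length p2" unfolding pp(1) by simp
      have F2: "a!t \<le> a!s" if "t<s" "s<length p1" for t s
      proof -
        have "p1!t \<le> p1!s" using sorted_nth_mono[OF pp(2), of t s] that by simp
        then show ?thesis using A1[of t] A1[of s] that by simp
      qed
      have F3: "a!u \<le> a!t" if "length p1 \<le> t" "t<length a" "a!t < M" "u<length a" "a!u < M" for t u
      proof -
        have "t - length p1 < length p2" using La that(1,2) by linarith
        then have "p2!(t - length p1) \<in> set p2" by (rule nth_mem)
        then have "a!t \<in> set p2" using A2[OF that(1)] by simp
        then have "a!t \<in> {M, premax a}" using pp(3) by blast
        then have "a!t = premax a" using that(3) by blast
        then show ?thesis using PM[of u] that(4,5) by simp
      qed
      note n = no_pat1[of a M "length p1", OF F0 F2 F3]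
      show ?thesis by (rule iffD2[OF Aeq], rule conjI[OF n(1) conjI[OF n(2) n(3)]])
    next
      case False
      then obtain p1 i j k where pp: "a = p1 @ replicate i M @ replicate j k" "sorted p1" using h by blast
      have A1: "a!t = p1!t" if "t < length p1" for t
        using that unfolding pp(1) by (simp add: nth_append)
      have F2: "a!t \<le> a!s" if "t<s" "s<length p1" for t s
      proof -
        have "p1!t \<le> p1!s" using sorted_nth_mono[OF pp(2), of t s] that by simp
        then show ?thesis using A1[of t] A1[of s] that by simp
      qed
      have FM: "a!t = M" if "length p1 \<le> t" "t < length p1 + i" for t
      proof -
        have "t - length p1 < i" using that by linarith
        then show ?thesis using that(1) unfolding pp(1) by (simp add: nth_append)
      qed
      have FK: "a!t = k" if "length p1 + i \<le> t" "t < length a" for t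
      proof -
        have "length a = length p1 + i + j" unfolding pp(1) by simp
        then have "\<not> t < length p1" "\<not> t - length p1 < i" "t - length p1 - i < j" using that by linarith+
        then show ?thesis unfolding pp(1) by (simp add: nth_append)
      qed
      note n = no_pat2[of a M "length p1" "length p1 + i" k, OF F0 F2 FM FK le_add1]
      show ?thesis by (rule iffD2[OF Aeq], rule conjI[OF n(1) conjI[OF n(2) n(3)]])
    qed
  qed
qed

end
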